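(* Under any parsimonious protocol $\Pi$, for each state of nature $\theta$ it is a best response for the sender never to stop at any transient memory state, i.e., to keep sending signals until the memory state reaches one of the two absorbing states, where the game ends and the receiver acts.
   Context: Setting. The state of nature is $\theta\in\Theta=\{H,L\}$ with prior $\Pr(\theta=H)=p\in(0,1)$. A sender privately observes $\theta$; a receiver does not. $S$ is a finite signal set; conditional on $\theta$, signals are i.i.d. with distribution $\pi_\theta$ on $S$, where $\pi_\theta(s)>0$ for all $s\in S,\theta\in\Theta$, and $\pi_H\neq\pi_L$. The receiver has a finite set of memory states $M$ and chooses a protocol $\Pi=(f,g,a)$: a transition function $f:M\times S\to\Delta(M)$ ($f(i,s)(j)$ is the probability of moving from memory state $i$ to $j$ after signal $s$), an initial distribution $g\in\Delta(M)$ of $m_0$, and an action rule $a:M\to[0,1]$ (probability of action $H$ if the game ends in that memory state). A sender strategy is $\sigma:M\times\Theta\to[0,1]$, the probability of stopping in the current memory state given $\theta$. Timing: $m_0\sim g$; in each period $t=0,1,\dots$, with current memory state $m_t$, the game ends if $m_t$ is absorbing ($f(m_t,s)(m_t)=1$ for all $s$); otherwise the sender stops with probability $\sigma(m_t,\theta)$, ending the game; if not stopped, a signal $s_t\sim\pi_\theta$ is generated and $m_{t+1}\sim f(m_t,s_t)$. When the game ends in state $m_t$ the receiver takes action $H$ with probability $a(m_t)$ and $L$ otherwise. The sender's payoff is $1$ if the action is $H$ and $0$ otherwise; there is no discounting; if the game never ends she gets $0$. Since $\pi_\theta$ has full support, which transitions have positive probability does not depend on $\theta$; absorbing/transient refer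 to the Markov chain on $M$ induced by $f$ with signals from $\pi_\theta$. A protocol is parsimonious if (i) it has exactly two absorbing memory states, one in which $a=0$ and one in which $a=1$, and (ii) all other memory states are transient with $a=0$. *)

theory Defs
  imports "HOL-Analysis.Analysis"
begin

datatype nature = H | L

text \<open>Protocol components: f i s j = probability of moving from memory state i to j after
signal s; g = initial distribution; a m = probability of action H when the game ends in m.
Signal distributions: sg th s. Sender strategy: strat m th = stopping probability.\<close>

definition absorbing :: "('m \<Rightarrow> 's \<Rightarrow> 'm \<Rightarrow> real) \<Rightarrow> 'm \<Rightarrow> bool" where
  "absorbing f m \<longleftrightarrow> (\<forall>s. f m s m = 1)"

definition trans_prob :: "(nature \<Rightarrow> 's::finite \<Rightarrow> real) \<Rightarrow> ('m \<Rightarrow> 's \<Rightarrow> 'm \<Rightarrow> real)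
    \<Rightarrow> nature \<Rightarrow> 'm \<Rightarrow> 'm \<Rightarrow> real" where
  "trans_prob sg f th i j = (\<Sum>s\<in>UNIV. sg th s * f i s j)"

text \<open>Taboo probabilities: first_visit n j = Pr(X_(n+1) = j and X_k \<noteq> i for 0<k<n+1 | X_0 = i).\<close>
fun first_visit :: "(nature \<Rightarrow> 's::finite \<Rightarrow> real) \<Rightarrow> ('m::finite \<Rightarrow> 's \<Rightarrow> 'm \<Rightarrow> real)
    \<Rightarrow> nature \<Rightarrow> 'm \<Rightarrow> nat \<Rightarrow> 'm \<Rightarrow> real" where
  "first_visit sg f th i 0 j = trans_prob sg f th i j"
| "first_visit sg f th i (Suc n) j =
     (\<Sum>k\<in>UNIV. (if k = i then 0 else first_visit sg f th i n k * trans_prob sg f th k j))"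

definition return_prob :: "(nature \<Rightarrow> 's::finite \<Rightarrow> real) \<Rightarrow> ('m::finite \<Rightarrow> 's \<Rightarrow> 'm \<Rightarrow> real)
    \<Rightarrow> nature \<Rightarrow> 'm \<Rightarrow> real" where
  "return_prob sg f th i = (\<Sum>n. first_visit sg f th i n i)"

definition transient :: "(nature \<Rightarrow> 's::finite \<Rightarrow> real) \<Rightarrow> ('m::finite \<Rightarrow> 's \<Rightarrow> 'm \<Rightarrow> real)
    \<Rightarrow> nature \<Rightarrow> 'm \<Rightarrow> bool" where
  "transient sg f th i \<longleftrightarrow> return_prob sg f th i < 1"

text \<open>Parsimonious protocol (transience required under the chain for each state of nature;
by full support of sg this does not depend on the state of nature).\<close>
definition parsimonious :: "(nature \<Rightarrow> 's::finite \<Rightarrow> real) \<Rightarrow> ('m::finite \<Rightarrow> 's \<Rightarrow> 'm \<Rightarrow> real)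
    \<Rightarrow> ('m \<Rightarrow> real) \<Rightarrow> bool" where
  "parsimonious sg f a \<longleftrightarrow>
     (\<exists>h l. h \<noteq> l \<and> absorbing f h \<and> absorbing f l \<and> a h = 1 \<and> a l = 0 \<and>
        (\<forall>m. absorbing f m \<longrightarrow> m = h \<or> m = l) \<and>
        (\<forall>m. m \<noteq> h \<and> m \<noteq> l \<longrightarrow> (\<forall>th. transient sg f th m) \<and> a m = 0))"

text \<open>alive t m = probability that the game has not ended before period t and m_t = m.\<close>
fun alive :: "(nature \<Rightarrow> 's::finite \<Rightarrow> real) \<Rightarrow> ('m::finite \<Rightarrow> 's \<Rightarrow> 'm \<Rightarrow> real)
    \<Rightarrow> ('m \<Rightarrow> real) \<Rightarrow> ('m \<Rightarrow> nature \<Rightarrow> real) \<Rightarrow> nature \<Rightarrow> nat \<Rightarrow> 'm \<Rightarrow> real" where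
  "alive sg f g strat th 0 m = g m"
| "alive sg f g strat th (Suc t) j =
     (\<Sum>i\<in>UNIV. alive sg f g strat th t i * (if absorbing f i then 0 else 1 - strat i th)
                 * trans_prob sg f th i j)"

definition end_prob :: "('m \<Rightarrow> 's \<Rightarrow> 'm \<Rightarrow> real) \<Rightarrow> ('m \<Rightarrow> nature \<Rightarrow> real)
    \<Rightarrow> nature \<Rightarrow> 'm \<Rightarrow> real" where
  "end_prob f strat th m = (if absorbing f m then 1 else strat m th)"

text \<open>Sender's expected payoff = probability that the game ends and action H is taken.\<close>
definition sender_payoff :: "(nature \<Rightarrow> 's::finite \<Rightarrow> real) \<Rightarrow> ('m::finite \<Rightarrow> 's \<Rightarrow> 'm \<Rightarrow> real)
    \<Rightarrow> ('m \<Rightarrow> real) \<Rightarrow> ('m \<Rightarrow> real) \<Rightarrow> ('m \<Rightarrow> nature \<Rightarrow> real) \<Rightarrow> nature \<Rightarrow> real" where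
  "sender_payoff sg f g a strat th =
     (\<Sum>t. \<Sum>m\<in>UNIV. alive sg f g strat th t m * end_prob f strat th m * a m)"

definition is_strategy :: "('m \<Rightarrow> nature \<Rightarrow> real) \<Rightarrow> bool" where
  "is_strategy strat \<longleftrightarrow> (\<forall>m th. 0 \<le> strat m th \<and> strat m th \<le> 1)"

end

theory Submission
  imports Defs
begin

lemma tp_nonneg:
  assumes "\<And>th s. sg th s > 0" "\<And>i s j. f i s j \<ge> 0"
  shows "trans_prob sg f th i j \<ge> 0"
  unfolding trans_prob_def
  by (rule sum_nonneg) (meson assms less_imp_le mult_nonneg_nonneg)

lemma tp_sum:
  assumes "\<And>th. (\<Sum>s\<in>UNIV. sg th s) = 1" "\<And>i s. (\<Sum>j\<in>UNIV. f i s j) = 1"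
  shows "(\<Sum>j\<in>UNIV. trans_prob sg f th i j) = 1"
proof -
  have "(\<Sum>j\<in>UNIV. trans_prob sg f th i j) = (\<Sum>s\<in>UNIV. sg th s * (\<Sum>j\<in>UNIV. f i s j))"
    unfolding trans_prob_def by (subst sum.swap) (simp add: sum_distrib_left)
  also have "\<dots> = 1" using assms by simp
  finally show ?thesis .
qed

lemma alive_nonneg:
  assumes tp: "\<And>i j. trans_prob sg f th i j \<ge> 0"
    and g: "\<And>m. g m \<ge> 0" and st: "is_strategy strat"
  shows "alive sg f g strat th t m \<ge> 0"
proof (induction t arbitrary: m)
  case 0 then show ?case using g by simp
next
  case (Suc t)
  have "\<And>i. 0 \<le> (if absorbing f i then 0 else 1 - strat i th)"
    using st unfolding is_strategy_def by auto
  then show ?case using Suc tp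
    by (simp, intro sum_nonneg mult_nonneg_nonneg) auto
qed

lemma alive_mono:
  assumes tp: "\<And>i j. trans_prob sg f th i j \<ge> 0"
    and g: "\<And>m. g m \<ge> 0" and st: "is_strategy strat" and st0: "is_strategy strat0"
    and s0: "\<And>m th. \<not> absorbing f m \<Longrightarrow> strat0 m th = 0"
  shows "alive sg f g strat th t m \<le> alive sg f g strat0 th t m"
proof (induction t arbitrary: m)
  case 0 then show ?case by simp
next
  case (Suc t)
  show ?case
  proof (simp, rule sum_mono)
    fix i
    have c: "0 \<le> (if absorbing f i then 0 else 1 - strat i th)"
         "(if absorbing f i then 0 else 1 - strat i th) \<le> (if absorbing f i then 0 else 1 - strat0 i th)"
      using st s0 unfolding is_strategy_def by auto
    have "alive sg f g strat th t i * (if absorbing f i then 0 else 1 - strat i th)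
        \<le> alive sg f g strat0 th t i * (if absorbing f i then 0 else 1 - strat0 i th)"
      using Suc[of i] c alive_nonneg[OF tp g st, where t=t and m=i] alive_nonneg[OF tp g st0, where t=t and m=i]
      by (meson mult_mono order_trans)
    then show "alive sg f g strat th t i * (if absorbing f i then 0 else 1 - strat i th) * trans_prob sg f th i m
        \<le> alive sg f g strat0 th t i * (if absorbing f i then 0 else 1 - strat0 i th) * trans_prob sg f th i m"
      using tp by (simp add: mult_right_mono)
  qed
qed

lemma mass_step:
  assumes tps: "\<And>i. (\<Sum>j\<in>UNIV. trans_prob sg f th i j) = 1"
  shows "(\<Sum>m\<in>UNIV. alive sg f g strat th t m * end_prob f strat th m)
     = (\<Sum>m\<in>UNIV. alive sg f g strat th t m) - (\<Sum>m\<in>UNIV. alive sg f g strat th (Suc t) m)"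
proof -
  have "(\<Sum>m\<in>UNIV. alive sg f g strat th (Suc t) m)
     = (\<Sum>i\<in>UNIV. alive sg f g strat th t i * (if absorbing f i then 0 else 1 - strat i th)
          * (\<Sum>j\<in>UNIV. trans_prob sg f th i j))"
    by (simp only: alive.simps sum_distrib_left) (rule sum.swap)
  also have "\<dots> = (\<Sum>i\<in>UNIV. alive sg f g strat th t i * (1 - end_prob f strat th i))"
    using tps by (intro sum.cong) (auto simp: end_prob_def)
  finally show ?thesis by (simp add: algebra_simps sum_subtractf)
qed

lemma partial_le:
  assumes tp: "\<And>i j. trans_prob sg f th i j \<ge> 0"
    and tps: "\<And>i. (\<Sum>j\<in>UNIV. trans_prob sg f th i j) = 1"
    and g: "\<And>m. g m \<ge> 0" and gs: "(\<Sum>m\<in>UNIV. g m) = 1" and st: "is_strategy strat"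
  shows "(\<Sum>t<n. \<Sum>m\<in>UNIV. alive sg f g strat th t m * end_prob f strat th m) \<le> 1"
proof -
  have "(\<Sum>t<n. \<Sum>m\<in>UNIV. alive sg f g strat th t m * end_prob f strat th m)
      = (\<Sum>m\<in>UNIV. alive sg f g strat th 0 m) - (\<Sum>m\<in>UNIV. alive sg f g strat th n m)"
    by (simp only: mass_step[OF tps]) (rule sum_lessThan_telescope'[where f="\<lambda>t. \<Sum>m\<in>UNIV. alive sg f g strat th t m"])
  also have "\<dots> \<le> 1" using gs alive_nonneg[OF tp g st] by (simp add: sum_nonneg)
  finally show ?thesis .
qed

lemma summable_pay:
  assumes tp: "\<And>i j. trans_prob sg f th i j \<ge> 0"
    and tps: "\<And>i. (\<Sum>j\<in>UNIV. trans_prob sg f th i j) = 1"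
    and g: "\<And>m. g m \<ge> 0" and gs: "(\<Sum>m\<in>UNIV. g m) = 1" and st: "is_strategy strat"
    and a: "\<And>m. 0 \<le> a m \<and> a m \<le> 1"
  shows "summable (\<lambda>t. \<Sum>m\<in>UNIV. alive sg f g strat th t m * end_prob f strat th m * a m)"
proof (rule summableI_nonneg_bounded)
  have ep: "\<And>m. 0 \<le> end_prob f strat th m" using st by (auto simp: end_prob_def is_strategy_def)
  have an: "\<And>t m. 0 \<le> alive sg f g strat th t m" using alive_nonneg[OF tp g st] .
  show "\<And>t. 0 \<le> (\<Sum>m\<in>UNIV. alive sg f g strat th t m * end_prob f strat th m * a m)"
    using ep an a by (intro sum_nonneg mult_nonneg_nonneg) auto
  fix n
  have "(\<Sum>t<n. \<Sum>m\<in>UNIV. alive sg f g strat th t m * end_prob f strat th m * a m)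
     \<le> (\<Sum>t<n. \<Sum>m\<in>UNIV. alive sg f g strat th t m * end_prob f strat th m)"
  proof (intro sum_mono)
    fix t m
    show "alive sg f g strat th t m * end_prob f strat th m * a m \<le> alive sg f g strat th t m * end_prob f strat th m"
      using a[of m] ep[of m] an[of t m] by (simp add: mult_left_le)
  qed
  also have "\<dots> \<le> 1" by (rule partial_le[OF tp tps g gs st])
  finally show "(\<Sum>t<n. \<Sum>m\<in>UNIV. alive sg f g strat th t m * end_prob f strat th m * a m) \<le> 1" .
qed

theorem lemma3:
  fixes sg :: "nature \<Rightarrow> 's::finite \<Rightarrow> real"
    and f :: "'m::finite \<Rightarrow> 's \<Rightarrow> 'm \<Rightarrow> real"
    and g :: "'m \<Rightarrow> real"
    and a :: "'m \<Rightarrow> real"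
    and strat0 :: "'m \<Rightarrow> nature \<Rightarrow> real"
  assumes pi_pos: "\<And>th s. sg th s > 0"
    and pi_sum: "\<And>th. (\<Sum>s\<in>UNIV. sg th s) = 1"
    and pi_diff: "sg H \<noteq> sg L"
    and f_nonneg: "\<And>i s j. f i s j \<ge> 0"
    and f_sum: "\<And>i s. (\<Sum>j\<in>UNIV. f i s j) = 1"
    and g_nonneg: "\<And>m. g m \<ge> 0"
    and g_sum: "(\<Sum>m\<in>UNIV. g m) = 1"
    and a_range: "\<And>m. 0 \<le> a m \<and> a m \<le> 1"
    and pars: "parsimonious sg f a"
    and strat0_strat: "is_strategy strat0"
    and strat0_never_stop: "\<And>m th. \<not> absorbing f m \<Longrightarrow> strat0 m th = 0"
  shows "\<forall>th. \<forall>strat. is_strategy strat \<longrightarrow>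
           sender_payoff sg f g a strat th \<le> sender_payoff sg f g a strat0 th"
proof (intro allI impI)
  fix th and strat :: "'m \<Rightarrow> nature \<Rightarrow> real"
  assume st: "is_strategy strat"
  have tp: "\<And>i j. trans_prob sg f th i j \<ge> 0" using tp_nonneg[OF pi_pos f_nonneg] .
  have tps: "\<And>i. (\<Sum>j\<in>UNIV. trans_prob sg f th i j) = 1" using tp_sum[OF pi_sum f_sum] .
  have am: "\<And>m. absorbing f m \<or> a m = 0" using pars unfolding parsimonious_def by metis
  show "sender_payoff sg f g a strat th \<le> sender_payoff sg f g a strat0 th"
    unfolding sender_payoff_def
  proof (rule suminf_le)
    show "summable (\<lambda>t. \<Sum>m\<in>UNIV. alive sg f g strat th t m * end_prob f strat th m * a m)"
      by (rule summable_pay[OF tp tps g_nonneg g_sum st a_range])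
    show "summable (\<lambda>t. \<Sum>m\<in>UNIV. alive sg f g strat0 th t m * end_prob f strat0 th m * a m)"
      by (rule summable_pay[OF tp tps g_nonneg g_sum strat0_strat a_range])
    fix t
    show "(\<Sum>m\<in>UNIV. alive sg f g strat th t m * end_prob f strat th m * a m)
        \<le> (\<Sum>m\<in>UNIV. alive sg f g strat0 th t m * end_prob f strat0 th m * a m)"
    proof (rule sum_mono)
      fix m
      show "alive sg f g strat th t m * end_prob f strat th m * a m
          \<le> alive sg f g strat0 th t m * end_prob f strat0 th m * a m"
      proof (cases "absorbing f m")
        case True
        then show ?thesis
          using alive_mono[OF tp g_nonneg st strat0_strat strat0_never_stop, where t=t and m=m] a_range[of m]
          by (simp add: end_prob_def mult_right_mono)
      next
        case False
        then show ?thesis using am[of m] by simp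
      qed
    qed
  qed
qed

end
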